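(* Let $r>1$ be real and let $d$ be a positive integer with $1\le d\le r-1$. Then $\sum_{n=d+1}^\infty n^{-r}<d^{-r}$. *)

theory Defs imports Complex_Main begin
end

theory Submission imports Defs begin

lemma key:
  fixes a s :: real
  assumes a: "a \<ge> 1" and s: "s > 0"
  shows "(a+1) powr (-(s+1)) < (a powr (-s) - (a+1) powr (-s)) / s"
proof -
  have "\<And>x. a \<le> x \<Longrightarrow> x \<le> a+1 \<Longrightarrow> ((\<lambda>z. z powr (-s)) has_real_derivative (-s) * x powr (-s - 1)) (at x)"
  proof -
    fix x assume "a \<le> x" "x \<le> a+1"
    hence "x > 0" using a by auto
    from has_real_derivative_powr[OF this, of "-s"] show "((\<lambda>z. z powr (-s)) has_real_derivative (-s) * x powr (-s - 1)) (at x)" .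
  qed
  from MVT2[of a "a+1", OF _ this] obtain z where z: "a < z" "z < a+1"
    "(a+1) powr (-s) - a powr (-s) = ((a+1) - a) * ((-s) * z powr (-s - 1))" by auto
  have "(a+1) powr (-(s+1)) < z powr (-(s+1))"
    using z a s by (intro powr_less_mono2_neg) auto
  also have "\<dots> = z powr (-s-1)" by (rule arg_cong[where f="\<lambda>e. z powr e"]) simp
  also have "\<dots> = (a powr (-s) - (a+1) powr (-s)) / s"
    using z(3) s by (simp add: field_simps)
  finally show ?thesis .
qed

theorem mainTheorem12:
  fixes r :: real and d :: nat
  assumes "r > 1" and "1 \<le> d" and "real d \<le> r - 1"
  shows "(\<Sum>k. real (k + d + 1) powr (-r)) < real d powr (-r)"
proof -
  define s where "s = r - 1"
  have s: "s > 0" using assms s_def by auto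
  define F where "F n = - (real (n + d) powr (-s)) / s" for n
  have lim: "F \<longlonglongrightarrow> 0"
  proof -
    have "(\<lambda>n. real (n + d) powr (-s)) \<longlonglongrightarrow> 0"
    proof -
      have fl: "filterlim (\<lambda>n. real (n + d)) at_top sequentially"
        by (intro filterlim_real_sequentially[THEN filterlim_compose] filterlim_add_const_nat_at_top)
      have "- s < 0" using s by simp
      from tendsto_neg_powr[OF this fl] show ?thesis .
    qed
    then have "(\<lambda>n. - (real (n + d) powr (-s)) / s) \<longlonglongrightarrow> - 0 / s"
      using s by (intro tendsto_intros) auto
    then show ?thesis by (simp add: F_def[abs_def])
  qed
  define g where "g n = F (Suc n) - F n" for n
  have gs: "g sums (0 - F 0)" unfolding g_def by (rule telescope_sums[OF lim])
  have g_eq: "g n = (real (n+d) powr (-s) - real (n + d + 1) powr (-s)) / s" for n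
    unfolding g_def F_def using s by (simp add: field_simps)
  have lt: "real (k + d + 1) powr (-r) < g k" for k
  proof -
    have "real (n+d) \<ge> 1" for n using assms by auto
    from key[OF this s, of k] show ?thesis unfolding g_eq s_def
      by (simp add: add.commute add.left_commute)
  qed
  have pos: "0 \<le> real (k + d + 1) powr (-r)" for k by simp
  have summ: "summable (\<lambda>k. real (k + d + 1) powr (-r))"
    by (rule summable_comparison_test[of _ g]) (use lt pos sums_summable[OF gs] less_imp_le in auto)
  have "0 < (\<Sum>k. g k - real (k + d + 1) powr (-r))"
    by (rule suminf_pos) (use summ sums_summable[OF gs] lt in \<open>auto intro: summable_diff\<close>)
  also have "\<dots> = suminf g - (\<Sum>k. real (k + d + 1) powr (-r))"
    by (rule suminf_diff[symmetric]) (use summ sums_summable[OF gs] in auto)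
  finally have "(\<Sum>k. real (k + d + 1) powr (-r)) < suminf g" by simp
  also have "suminf g = real d powr (-s) / s" using sums_unique[OF gs] by (simp add: F_def)
  also have "\<dots> = real d * real d powr (-r) / s"
  proof -
    have "real d powr (1 + -r) = real d powr 1 * real d powr (-r)" by (rule powr_add)
    then show ?thesis using assms unfolding s_def by simp
  qed
  also have "\<dots> \<le> real d powr (-r)"
  proof -
    have "real d * real d powr (-r) \<le> (r - 1) * real d powr (-r)"
      using assms by (intro mult_right_mono) auto
    then show ?thesis using s unfolding s_def by (simp add: divide_le_eq mult.commute)
  qed
  finally show ?thesis .
qed
end
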